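(* Let $(\vec S,\le,{}^* )$ be a separation system, let $\mathcal F\subseteq 2^{\vec S}$ be a set of stars, and let $(T,\alpha)$ be an irredundant $S$-tree over $\mathcal F$. Let $e,f$ be distinct edges of $T$ with orientations $\vec e<\overleftarrow f$ (in the natural partial ordering of $\vec E(T)$) such that $\alpha(\vec e)=\alpha(\vec f)=:\vec r$. Then $\vec r$ is trivial in $\vec S$. In particular, $T$ cannot have two distinct leaves both associated with the same star $\{\overleftarrow r\}$ unless $\vec r$ is trivial, or $T$ has only one edge $e$ and $\alpha(\vec e)=\alpha(\overleftarrow e)$ is degenerate.
   Context: A separation system $(\vec S,\le,{}^* )$ is a partially ordered set $\vec S$ together with an involution ${}^*$ that is order-reversing, i.e. $\vec r\le\vec s\iff \vec r^{\,*}\ge\vec s^{\,*}$. For $\vec s\in\vec S$ we write $\overleftarrow s:=\vec s^{\,*}$. A separation is a set $s=\{\vec s,\overleftarrow s\}$; $S$ denotes the set of all separations; $s$ and $\vec s$ are degenerate if $\vec s=\overleftarrow s$. An element $\vec r\in\vec S$ is trivial in $\vec S$ if there is $s\in S$ with $\vec r<\vec s$ and $\vec r<\overleftarrow s$. A star is a nonempty set $\sigma\subseteq\vec S$ such that $\vec r\le\overleftarrow s$ for all distinct $\vec r,\vec s\in\sigma$. An $S$-tree is a pair $(T,\alpha)$ where $T$ is a finite tree with at least one edge and $\alpha:\vec E(T)\to\vec S$, with $\vec E(T)=\{(x,y):\{x,y\}\in E(T)\}$, satisfies $\alpha(y,x)=\alpha(x,y)^*$ for every edge $xy$. For a node $t$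 let $\vec F_t=\{(x,t):xt\in E(T)\}$; $\alpha(\vec F_t)$ is said to be associated with $t$. The $S$-tree is over $\mathcal F\subseteq 2^{\vec S}$ if $\alpha(\vec F_t)\in\mathcal F$ for every node $t$. It is redundant if some node $t$ has distinct neighbours $t',t''$ with $\alpha(t',t)=\alpha(t'',t)$, and irredundant otherwise. The natural partial ordering on $\vec E(T)$ is defined by $(x,y)<(u,v)$ if $\{x,y\}\neq\{u,v\}$ and the unique path in $T$ that meets $\{x,y\}$ only in its first vertex and $\{u,v\}$ only in its last vertex starts at $y$ and ends at $u$. For an edge $e=xy$, $\vec e$ and $\overleftarrow e$ denote its two orientations $(x,y),(y,x)$. *)

theory Defs
  imports Main
begin

definition sep_system :: "'a set \<Rightarrow> ('a \<Rightarrow> 'a \<Rightarrow> bool) \<Rightarrow> ('a \<Rightarrow> 'a) \<Rightarrow> bool" where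
  "sep_system SS le invol \<longleftrightarrow>
     (\<forall>r\<in>SS. le r r) \<and>
     (\<forall>r\<in>SS. \<forall>s\<in>SS. le r s \<and> le s r \<longrightarrow> r = s) \<and>
     (\<forall>r\<in>SS. \<forall>s\<in>SS. \<forall>t\<in>SS. le r s \<and> le s t \<longrightarrow> le r t) \<and>
     (\<forall>r\<in>SS. invol r \<in> SS \<and> invol (invol r) = r) \<and>
     (\<forall>r\<in>SS. \<forall>s\<in>SS. le r s \<longleftrightarrow> le (invol s) (invol r))"

definition sep_less :: "('a \<Rightarrow> 'a \<Rightarrow> bool) \<Rightarrow> 'a \<Rightarrow> 'a \<Rightarrow> bool" where
  "sep_less le r s \<longleftrightarrow> le r s \<and> r \<noteq> s"

definition trivial_sep :: "'a set \<Rightarrow> ('a \<Rightarrow> 'a \<Rightarrow> bool) \<Rightarrow> ('a \<Rightarrow> 'a) \<Rightarrow> 'a \<Rightarrow> bool" where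
  "trivial_sep SS le invol r \<longleftrightarrow> (\<exists>s\<in>SS. sep_less le r s \<and> sep_less le r (invol s))"

definition is_star :: "'a set \<Rightarrow> ('a \<Rightarrow> 'a \<Rightarrow> bool) \<Rightarrow> ('a \<Rightarrow> 'a) \<Rightarrow> 'a set \<Rightarrow> bool" where
  "is_star SS le invol \<sigma> \<longleftrightarrow> \<sigma> \<noteq> {} \<and> \<sigma> \<subseteq> SS \<and>
     (\<forall>r\<in>\<sigma>. \<forall>s\<in>\<sigma>. r \<noteq> s \<longrightarrow> le r (invol s))"

definition is_path :: "'v set \<Rightarrow> 'v set set \<Rightarrow> 'v list \<Rightarrow> bool" where
  "is_path V E P \<longleftrightarrow> P \<noteq> [] \<and> distinct P \<and> set P \<subseteq> V \<and>
     (\<forall>i. Suc i < length P \<longrightarrow> {P ! i, P ! Suc i} \<in> E)"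

definition is_tree :: "'v set \<Rightarrow> 'v set set \<Rightarrow> bool" where
  "is_tree V E \<longleftrightarrow> finite V \<and> V \<noteq> {} \<and>
     (\<forall>e\<in>E. \<exists>x y. e = {x, y} \<and> x \<noteq> y \<and> x \<in> V \<and> y \<in> V) \<and>
     (\<forall>x\<in>V. \<forall>y\<in>V. \<exists>P. is_path V E P \<and> hd P = x \<and> last P = y) \<and>
     \<not> (\<exists>C. length C \<ge> 3 \<and> is_path V E C \<and> {last C, hd C} \<in> E)"

definition oriented_edges :: "'v set set \<Rightarrow> ('v \<times> 'v) set" where
  "oriented_edges E = {(x, y). {x, y} \<in> E}"

definition F_at :: "'v set set \<Rightarrow> 'v \<Rightarrow> ('v \<times> 'v) set" where
  "F_at E t = {(x, t) | x. {x, t} \<in> E}"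

definition is_leaf :: "'v set set \<Rightarrow> 'v \<Rightarrow> bool" where
  "is_leaf E t \<longleftrightarrow> card {x. {x, t} \<in> E} = 1"

definition edge_less :: "'v set \<Rightarrow> 'v set set \<Rightarrow> 'v \<times> 'v \<Rightarrow> 'v \<times> 'v \<Rightarrow> bool" where
  "edge_less V E xy uv \<longleftrightarrow> (case xy of (x, y) \<Rightarrow> case uv of (u, v) \<Rightarrow>
     {x, y} \<noteq> {u, v} \<and>
     (\<exists>P. is_path V E P \<and> hd P = y \<and> last P = u \<and>
          set P \<inter> {x, y} = {y} \<and> set P \<inter> {u, v} = {u}))"

definition S_tree :: "'a set \<Rightarrow> ('a \<Rightarrow> 'a) \<Rightarrow> 'v set \<Rightarrow> 'v set set \<Rightarrow> ('v \<times> 'v \<Rightarrow> 'a) \<Rightarrow> bool" where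
  "S_tree SS invol V E \<alpha> \<longleftrightarrow> is_tree V E \<and> E \<noteq> {} \<and>
     (\<forall>(x, y)\<in>oriented_edges E. \<alpha> (x, y) \<in> SS \<and> \<alpha> (y, x) = invol (\<alpha> (x, y)))"

definition S_tree_over :: "'v set \<Rightarrow> 'v set set \<Rightarrow> ('v \<times> 'v \<Rightarrow> 'a) \<Rightarrow> 'a set set \<Rightarrow> bool" where
  "S_tree_over V E \<alpha> \<F> \<longleftrightarrow> (\<forall>t\<in>V. \<alpha> ` F_at E t \<in> \<F>)"

definition irredundant :: "'v set \<Rightarrow> 'v set set \<Rightarrow> ('v \<times> 'v \<Rightarrow> 'a) \<Rightarrow> bool" where
  "irredundant V E \<alpha> \<longleftrightarrow> (\<forall>t\<in>V. \<forall>t' t''. t' \<noteq> t'' \<and> {t', t} \<in> E \<and> {t'', t} \<in> E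
       \<longrightarrow> \<alpha> (t', t) \<noteq> \<alpha> (t'', t))"

end

theory Submission
  imports Defs
begin


lemma chain_trivial:
  assumes sys: "sep_system SS le invol"
    and n: "n \<ge> 2" and inS: "\<forall>i<n. t i \<in> SS"
    and step: "\<forall>i. Suc i < n \<longrightarrow> le (t i) (t (Suc i)) \<and> t i \<noteq> invol (t (Suc i))"
    and t0: "t 0 = r" and tn: "t (n - 1) = invol r"
  shows "trivial_sep SS le invol r"
proof -
  have refl: "\<forall>r\<in>SS. le r r" and trans: "\<forall>r\<in>SS. \<forall>s\<in>SS. \<forall>t\<in>SS. le r s \<and> le s t \<longrightarrow> le r t"
    and inv: "\<forall>r\<in>SS. invol r \<in> SS \<and> invol (invol r) = r"
    and rev: "\<forall>r\<in>SS. \<forall>s\<in>SS. le r s \<longleftrightarrow> le (invol s) (invol r)"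
    using sys unfolding sep_system_def by blast+
  have rS: "r \<in> SS" using inS t0 n by force
  have mono: "j < n \<Longrightarrow> i \<le> j \<Longrightarrow> le (t i) (t j)" for i j
  proof (induction j)
    case 0 then show ?case using refl inS by auto
  next
    case (Suc j)
    show ?case
    proof (cases "i = Suc j")
      case True then show ?thesis using refl inS Suc by auto
    next
      case False
      then have "le (t i) (t j)" using Suc by auto
      moreover have "le (t j) (t (Suc j))" using step Suc by auto
      ultimately show ?thesis using trans inS Suc by (meson Suc_lessD le_less_trans)
    qed
  qed
  have ex: "\<exists>i<n. t i \<noteq> r \<and> t i \<noteq> invol r"
  proof (rule ccontr)
    assume "\<not> ?thesis"
    then have all: "\<forall>i<n. t i = r \<or> t i = invol r" by auto
    have allr: "i < n \<Longrightarrow> t i = r" for i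
    proof (induction i)
      case 0 then show ?case using t0 by simp
    next
      case (Suc i)
      then have "t i = r" by simp
      moreover have "t i \<noteq> invol (t (Suc i))" using step Suc by auto
      ultimately show ?case using all Suc inv rS by metis
    qed
    have "t 1 = r" using allr n by simp
    moreover have "t 0 \<noteq> invol (t 1)" using step n by auto
    moreover have "t (n - 1) = r" using allr n by simp
    ultimately show False using t0 tn by simp
  qed
  then obtain i where i: "i < n" "t i \<noteq> r" "t i \<noteq> invol r" by blast
  have si: "t i \<in> SS" using inS i by auto
  have "le r (t i)" using mono[of i 0] i t0 by simp
  moreover have "le (t i) (invol r)" using mono[of "n - 1" i] i tn n by simp
  then have "le r (invol (t i))" using rev inv rS si by metis
  moreover have "r \<noteq> invol (t i)" using i inv si by metis
  ultimately show ?thesis unfolding trivial_sep_def sep_less_def using si i by metis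
qed



lemma edge_facts:
  assumes tree: "S_tree SS invol V E \<alpha>" and e: "{a, b} \<in> E"
  shows "a \<noteq> b" "a \<in> V" "b \<in> V" "{b, a} \<in> E"
    "\<alpha> (a, b) \<in> SS" "\<alpha> (b, a) = invol (\<alpha> (a, b))"
proof -
  from tree have T: "is_tree V E" unfolding S_tree_def by blast
  then obtain x y where "{a,b} = {x,y}" "x \<noteq> y" "x \<in> V" "y \<in> V"
    using e unfolding is_tree_def by blast
  then show "a \<noteq> b" "a \<in> V" "b \<in> V" by (auto simp: doubleton_eq_iff)
  show "{b, a} \<in> E" using e by (simp add: insert_commute)
  have "(a, b) \<in> oriented_edges E" using e by (simp add: oriented_edges_def)
  then show "\<alpha> (a, b) \<in> SS" "\<alpha> (b, a) = invol (\<alpha> (a, b))"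
    using tree unfolding S_tree_def by auto
qed

lemma local_step:
  assumes sys: "sep_system SS le invol"
    and stars: "\<forall>\<sigma>\<in>\<F>. is_star SS le invol \<sigma>"
    and tree: "S_tree SS invol V E \<alpha>"
    and over: "S_tree_over V E \<alpha> \<F>"
    and irr: "irredundant V E \<alpha>"
    and ab: "{a, b} \<in> E" and bc: "{b, c} \<in> E" and ac: "a \<noteq> c"
  shows "le (\<alpha> (a, b)) (\<alpha> (b, c)) \<and> \<alpha> (a, b) \<noteq> invol (\<alpha> (b, c))"
proof -
  have bV: "b \<in> V" using edge_facts[OF tree ab] by simp
  have cb: "{c, b} \<in> E" using bc by (simp add: insert_commute)
  have st: "is_star SS le invol (\<alpha> ` F_at E b)" using over stars bV
    unfolding S_tree_over_def by blast
  have m1: "\<alpha> (a, b) \<in> \<alpha> ` F_at E b" using ab by (auto simp: F_at_def)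
  have m2: "\<alpha> (c, b) \<in> \<alpha> ` F_at E b" using cb by (auto simp: F_at_def)
  have ne: "\<alpha> (a, b) \<noteq> \<alpha> (c, b)" using irr bV ab cb ac unfolding irredundant_def by blast
  have "le (\<alpha> (a, b)) (invol (\<alpha> (c, b)))" using st m1 m2 ne unfolding is_star_def by blast
  moreover have "\<alpha> (c, b) = invol (\<alpha> (b, c))" using edge_facts[OF tree bc] by simp
  moreover have "invol (invol (\<alpha> (b, c))) = \<alpha> (b, c)"
    using edge_facts[OF tree bc] sys unfolding sep_system_def by blast
  ultimately show ?thesis using ne by simp
qed



lemma part1:
  assumes sys: "sep_system SS le invol"
    and stars: "\<forall>\<sigma>\<in>\<F>. is_star SS le invol \<sigma>"
    and tree: "S_tree SS invol V E \<alpha>"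
    and over: "S_tree_over V E \<alpha> \<F>"
    and irr: "irredundant V E \<alpha>"
    and xy: "{x, y} \<in> E" and uv: "{u, v} \<in> E" and ne: "{x, y} \<noteq> {u, v}"
    and lt: "edge_less V E (x, y) (v, u)" and eq: "\<alpha> (x, y) = \<alpha> (u, v)"
  shows "trivial_sep SS le invol (\<alpha> (x, y))"
proof -
  obtain P where P: "is_path V E P" "hd P = y" "last P = v" "set P \<inter> {x, y} = {y}"
    "set P \<inter> {v, u} = {v}"
    using lt unfolding edge_less_def by auto
  have Pne: "P \<noteq> []" and Pd: "distinct P"
    and Pe: "\<And>i. Suc i < length P \<Longrightarrow> {P ! i, P ! Suc i} \<in> E"
    using P(1) unfolding is_path_def by auto
  have xy_ne: "x \<noteq> y" and uv_ne: "u \<noteq> v" using edge_facts[OF tree xy] edge_facts[OF tree uv] by auto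
  have xP: "x \<notin> set P" using P(4) xy_ne by auto
  have uP: "u \<notin> set P" using P(5) uv_ne by auto
  define W where "W = x # P @ [u]"
  have lenW: "length W = length P + 2" unfolding W_def by simp
  have lP: "length P \<ge> 1" using Pne by (cases P) auto
  have P0: "P ! 0 = y" using P(2) Pne by (simp add: hd_conv_nth)
  have Plast: "P ! (length P - 1) = v" using P(3) Pne by (simp add: last_conv_nth)
  have W0: "W ! 0 = x" unfolding W_def by simp
  have WS: "i < length P \<Longrightarrow> W ! Suc i = P ! i" for i unfolding W_def by (simp add: nth_append)
  have WL: "W ! Suc (length P) = u" unfolding W_def by (simp add: nth_append)
  have Wedge: "{W ! i, W ! Suc i} \<in> E" if "i < length P + 1" for i
  proof (cases i)
    case 0 then show ?thesis using W0 WS[of 0] lP P0 xy Pne by simp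
  next
    case (Suc j)
    show ?thesis
    proof (cases "Suc j < length P")
      case True then show ?thesis using Suc WS Pe[of j] by simp
    next
      case False
      then have "j = length P - 1" "i = length P" using Suc that by auto
      moreover have "Suc (length P - 1) = length P" using lP by simp
      ultimately show ?thesis using WS[of j] WL Plast lP uv by (simp add: insert_commute)
    qed
  qed
  have Wtri: "W ! i \<noteq> W ! Suc (Suc i)" if "i < length P" for i
  proof (cases i)
    case 0
    show ?thesis
    proof (cases "1 < length P")
      case True
      then have "W ! Suc (Suc i) \<in> set P" using 0 WS[of 1] by simp
      then show ?thesis using 0 W0 xP by auto
    next
      case False
      then have lp1: "length P = 1" using lP by simp
      then have "W ! Suc (Suc i) = u" using 0 WL by simp
      moreover have "v = y" using P0 Plast lp1 by simp
      ultimately show ?thesis using 0 W0 ne by auto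
    qed
  next
    case (Suc j)
    have Wi: "W ! i = P ! j" using Suc WS[of j] that by simp
    show ?thesis
    proof (cases "Suc i < length P")
      case True
      then have "W ! Suc (Suc i) = P ! Suc i" using WS by simp
      then show ?thesis using Wi Pd True Suc by (simp add: nth_eq_iff_index_eq)
    next
      case False
      then have "Suc i = length P" using that by simp
      then have "W ! Suc (Suc i) = u" using WL by simp
      moreover have "P ! j \<in> set P" using Suc that by simp
      ultimately show ?thesis using Wi uP by auto
    qed
  qed
  define t where "t i = \<alpha> (W ! i, W ! Suc i)" for i
  show ?thesis
  proof (rule chain_trivial[OF sys, where n = "length P + 1" and t = t])
    show "2 \<le> length P + 1" using lP by simp
    show "\<forall>i<length P + 1. t i \<in> SS" using Wedge edge_facts(5)[OF tree] unfolding t_def by blast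
    show "\<forall>i. Suc i < length P + 1 \<longrightarrow> le (t i) (t (Suc i)) \<and> t i \<noteq> invol (t (Suc i))"
      using local_step[OF sys stars tree over irr] Wedge Wtri unfolding t_def by simp
    show "t 0 = \<alpha> (x, y)" unfolding t_def using W0 WS[of 0] lP P0 Pne by simp
    have sl: "Suc (length P - 1) = length P" using lP by simp
    have "t (length P + 1 - 1) = \<alpha> (v, u)" using sl unfolding t_def using WS[of "length P - 1"] WL Plast lP by (simp add: Suc_diff_le)
    also have "\<dots> = invol (\<alpha> (u, v))" using edge_facts(6)[OF tree uv] .
    finally show "t (length P + 1 - 1) = invol (\<alpha> (x, y))" using eq by simp
  qed
qed



lemma leaf_nb:
  assumes "is_leaf E t" shows "\<exists>a. {x. {x, t} \<in> E} = {a}"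
  using assms unfolding is_leaf_def by (simp add: card_1_singleton_iff)

lemma avoid_leaf:
  assumes Q: "is_path V E Q" and hq: "hd Q = p" and lq: "last Q = q"
    and nb: "\<And>z. {z, t} \<in> E \<Longrightarrow> z = a"
    and tp: "t \<noteq> p" and tq: "t \<noteq> q"
  shows "t \<notin> set Q"
proof
  assume "t \<in> set Q"
  then obtain j where j: "j < length Q" "Q ! j = t" by (auto simp: in_set_conv_nth)
  have Qne: "Q \<noteq> []" and Qd: "distinct Q"
    and Qe: "\<And>i. Suc i < length Q \<Longrightarrow> {Q ! i, Q ! Suc i} \<in> E"
    using Q unfolding is_path_def by auto
  have "j \<noteq> 0" using j hq tp Qne by (metis hd_conv_nth)
  moreover have "j \<noteq> length Q - 1" using j lq tq Qne by (auto simp: last_conv_nth)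
  ultimately obtain k where k: "j = Suc k" "Suc (Suc k) < length Q" using j
    by (cases j) auto
  have "{Q ! k, t} \<in> E" using Qe[of k] k j by simp
  then have "Q ! k = a" by (rule nb)
  moreover have "{Q ! Suc (Suc k), t} \<in> E" using Qe[of "Suc k"] k j by (simp add: insert_commute)
  then have "Q ! Suc (Suc k) = a" by (rule nb)
  ultimately have "Q ! k = Q ! Suc (Suc k)" by simp
  moreover have "k < length Q" using k by simp
  ultimately show False using Qd k nth_eq_iff_index_eq by fastforce
qed

lemma two_leaves_all:
  assumes T: "is_tree V E" and pV: "p \<in> V" and t1V: "t1 \<in> V"
    and nb1: "\<And>z. {z, t1} \<in> E \<Longrightarrow> z = t2"
    and nb2: "\<And>z. {z, t2} \<in> E \<Longrightarrow> z = t1"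
  shows "p = t1 \<or> p = t2"
proof (rule ccontr)
  assume np: "\<not> ?thesis"
  obtain Q where Q: "is_path V E Q" "hd Q = p" "last Q = t1"
    using T pV t1V unfolding is_tree_def by blast
  have Qne: "Q \<noteq> []" and Qd: "distinct Q"
    and Qe: "\<And>i. Suc i < length Q \<Longrightarrow> {Q ! i, Q ! Suc i} \<in> E"
    using Q(1) unfolding is_path_def by auto
  define m where "m = length Q"
  have h0: "Q ! 0 = p" using Q Qne by (simp add: hd_conv_nth)
  have hl: "Q ! (m - 1) = t1" using Q Qne by (simp add: last_conv_nth m_def)
  have "m \<noteq> 1" using h0 hl np by auto
  moreover have "m \<noteq> 0" using Qne m_def by simp
  ultimately have m2: "m \<ge> 2" by simp
  have "{Q ! (m - 2), Q ! Suc (m - 2)} \<in> E" using Qe[of "m - 2"] m2 m_def by simp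
  moreover have "Suc (m - 2) = m - 1" using m2 by simp
  ultimately have "{Q ! (m - 2), t1} \<in> E" using hl by simp
  then have q2: "Q ! (m - 2) = t2" by (rule nb1)
  then have "m \<noteq> 2" using h0 np by auto
  then have m3: "m \<ge> 3" using m2 by simp
  have "{Q ! (m - 3), Q ! Suc (m - 3)} \<in> E" using Qe[of "m - 3"] m3 m_def by simp
  moreover have "Suc (m - 3) = m - 2" using m3 by simp
  ultimately have "{Q ! (m - 3), t2} \<in> E" using q2 by simp
  then have "Q ! (m - 3) = t1" by (rule nb2)
  then have "Q ! (m - 3) = Q ! (m - 1)" using hl by simp
  then show False using Qd m3 m_def by (simp add: nth_eq_iff_index_eq)
qed



theorem lemma2p3:
  fixes SS :: "'a set" and le :: "'a \<Rightarrow> 'a \<Rightarrow> bool" and invol :: "'a \<Rightarrow> 'a"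
    and \<F> :: "'a set set"
    and V :: "'v set" and E :: "'v set set" and \<alpha> :: "'v \<times> 'v \<Rightarrow> 'a"
  assumes sys: "sep_system SS le invol"
    and stars: "\<forall>\<sigma>\<in>\<F>. is_star SS le invol \<sigma>"
    and tree: "S_tree SS invol V E \<alpha>"
    and over: "S_tree_over V E \<alpha> \<F>"
    and irr: "irredundant V E \<alpha>"
  shows "(\<forall>x y u v. {x, y} \<in> E \<and> {u, v} \<in> E \<and> {x, y} \<noteq> {u, v}
            \<and> edge_less V E (x, y) (v, u) \<and> \<alpha> (x, y) = \<alpha> (u, v)
            \<longrightarrow> trivial_sep SS le invol (\<alpha> (x, y)))
       \<and> (\<forall>r\<in>SS. \<forall>t1\<in>V. \<forall>t2\<in>V. t1 \<noteq> t2 \<and> is_leaf E t1 \<and> is_leaf E t2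
            \<and> \<alpha> ` F_at E t1 = {invol r} \<and> \<alpha> ` F_at E t2 = {invol r}
            \<longrightarrow> trivial_sep SS le invol r
                \<or> (\<exists>x y. E = {{x, y}} \<and> \<alpha> (x, y) = \<alpha> (y, x)))"
proof (intro conjI allI impI ballI)
  fix x y u v
  assume "{x, y} \<in> E \<and> {u, v} \<in> E \<and> {x, y} \<noteq> {u, v}
            \<and> edge_less V E (x, y) (v, u) \<and> \<alpha> (x, y) = \<alpha> (u, v)"
  then show "trivial_sep SS le invol (\<alpha> (x, y))"
    using part1[OF sys stars tree over irr] by blast
next
  fix r t1 t2
  assume rS: "r \<in> SS" and t1V: "t1 \<in> V" and t2V: "t2 \<in> V"
    and H: "t1 \<noteq> t2 \<and> is_leaf E t1 \<and> is_leaf E t2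
            \<and> \<alpha> ` F_at E t1 = {invol r} \<and> \<alpha> ` F_at E t2 = {invol r}"
  have T: "is_tree V E" using tree unfolding S_tree_def by blast
  have invr: "invol (invol r) = r" using sys rS unfolding sep_system_def by blast
  from H have t12: "t1 \<noteq> t2" and L1: "is_leaf E t1" and L2: "is_leaf E t2"
    and A1: "\<alpha> ` F_at E t1 = {invol r}" and A2: "\<alpha> ` F_at E t2 = {invol r}" by auto
  obtain a1 where N1: "{z. {z, t1} \<in> E} = {a1}" using leaf_nb[OF L1] by blast
  obtain a2 where N2: "{z. {z, t2} \<in> E} = {a2}" using leaf_nb[OF L2] by blast
  have e1: "{a1, t1} \<in> E" using N1 by (metis mem_Collect_eq singletonI)
  have e2: "{a2, t2} \<in> E" using N2 by (metis mem_Collect_eq singletonI)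
  have nb1: "\<And>z. {z, t1} \<in> E \<Longrightarrow> z = a1" using N1 by (metis mem_Collect_eq singletonD)
  have nb2: "\<And>z. {z, t2} \<in> E \<Longrightarrow> z = a2" using N2 by (metis mem_Collect_eq singletonD)
  have F1: "F_at E t1 = {(a1, t1)}" using nb1 e1 unfolding F_at_def by blast
  have F2: "F_at E t2 = {(a2, t2)}" using nb2 e2 unfolding F_at_def by blast
  have "\<alpha> (a1, t1) = invol r" using A1 F1 by simp
  then have r1: "\<alpha> (t1, a1) = r" using edge_facts(6)[OF tree e1] invr by simp
  have "\<alpha> (a2, t2) = invol r" using A2 F2 by simp
  then have r2: "\<alpha> (t2, a2) = r" using edge_facts(6)[OF tree e2] invr by simp
  have e1': "{t1, a1} \<in> E" and e2': "{t2, a2} \<in> E" using e1 e2 by (simp_all add: insert_commute)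
  show "trivial_sep SS le invol r \<or> (\<exists>x y. E = {{x, y}} \<and> \<alpha> (x, y) = \<alpha> (y, x))"
  proof (cases "{t1, a1} = {a2, t2}")
    case True
    then have a1: "a1 = t2" and a2: "a2 = t1" using t12 by (auto simp: doubleton_eq_iff)
    have allV: "p \<in> V \<Longrightarrow> p = t1 \<or> p = t2" for p
      using two_leaves_all[OF T _ t1V] nb1 nb2 a1 a2 by blast
    have "E = {{t1, t2}}"
    proof
      show "E \<subseteq> {{t1, t2}}"
      proof
        fix e assume eE: "e \<in> E"
        then obtain p q where "e = {p, q}" "p \<noteq> q" "p \<in> V" "q \<in> V"
          using T unfolding is_tree_def by blast
        then show "e \<in> {{t1, t2}}" using allV by auto
      qed
      show "{{t1, t2}} \<subseteq> E" using e1' a1 by simp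
    qed
    moreover have "\<alpha> (t1, t2) = \<alpha> (t2, t1)" using r1 r2 a1 a2 by simp
    ultimately show ?thesis by blast
  next
    case False
    have a1V: "a1 \<in> V" and a2V: "a2 \<in> V"
      using edge_facts[OF tree e1] edge_facts[OF tree e2] by auto
    have t1a1: "t1 \<noteq> a1" and t2a2: "t2 \<noteq> a2"
      using edge_facts[OF tree e1] edge_facts[OF tree e2] by auto
    have t1a2: "t1 \<noteq> a2"
    proof
      assume "t1 = a2"
      then have "{t2, t1} \<in> E" using e2' by (simp add: insert_commute)
      then have "t2 = a1" by (rule nb1)
      then show False using False \<open>t1 = a2\<close> by (auto simp: insert_commute)
    qed
    have t2a1: "t2 \<noteq> a1"
    proof
      assume "t2 = a1"
      then have "{t1, t2} \<in> E" using e1' by simp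
      then have "t1 = a2" by (rule nb2)
      then show False using t1a2 by simp
    qed
    obtain Q where Q: "is_path V E Q" "hd Q = a1" "last Q = a2"
      using T a1V a2V unfolding is_tree_def by blast
    have Qne: "Q \<noteq> []" using Q(1) unfolding is_path_def by simp
    have n1: "t1 \<notin> set Q" using avoid_leaf[OF Q nb1] t1a1 t1a2 by blast
    have n2: "t2 \<notin> set Q" using avoid_leaf[OF Q nb2] t2a1 t2a2 by blast
    have "a1 \<in> set Q" using Q(2) Qne by auto
    moreover have "a2 \<in> set Q" using Q(3) Qne by auto
    ultimately have "edge_less V E (t1, a1) (a2, t2)"
      unfolding edge_less_def using False Q n1 n2 by auto
    then have "trivial_sep SS le invol (\<alpha> (t1, a1))"
      using part1[OF sys stars tree over irr e1' e2'] False r1 r2 by (simp add: insert_commute)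
    then show ?thesis using r1 by simp
  qed
qed


end
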